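(* Let $\pi\in S_n$, $0\le u<v\le n$, and assume that $I=\{u+1,\dots,v\}$ is a $\pi$-section. Let $\sigma$ be the restriction of $\pi$ to $I$, regarded as the permutation $k\mapsto\pi(u+k)-u$ of $\{1,\dots,v-u\}$. Then $[c_u]_{\beta_\pi}$ and $[c_v]_{\beta_\pi}$ are narrows of $G/\beta_\pi$, and the subdiagram of the canonical diagram of $G/\beta_\pi$ determined by the interval $\bigl[[c_u]_{\beta_\pi},[c_v]_{\beta_\pi}\bigr]$ equals (up to boundary similarity) the canonical diagram of $G'/\beta_\sigma$, where $G'$ is the square grid of length $2(v-u)$.
   Context: For $m\ge1$, the square grid of length $2m$ is the direct product of chains $0=c_0\prec\dots\prec c_m$ and $0=d_0\prec\dots\prec d_m$, elements written $c_i\vee d_j$; $G$ denotes the one with $m=n$. For $\pi\in S_m$, $\beta_\pi$ is the join, in the lattice of join-congruences (equivalences compatible with $\vee$), of the smallest join-congruences collapsing $\{c_{i-1}\vee d_{\pi(i)},c_i\vee d_{\pi(i)-1},c_i\vee d_{\pi(i)}\}$, $i=1,\dots,m$; the quotient is a slim semimodular lattice of length $m$ and its canonical diagram is its planar diagram whose left boundary chain is $\{[c_i]_{\beta_\pi}\}$ and right boundary chain is $\{[d_i]_{\beta_\pi}\}$ (diagrams considered up to boundary similarity, i.e. up to isomorphisms preserving left and right boundary chains). A narrows of a lattice is an element comparable with every element. For $\sigma\in S_n$, a set $J$ is closed if $\sigma(J)\subseteq J$; a nonempty interval $\{a,\dots,b\}$ of $\{1<\dots<n\}$ is a $\sigma$-section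 if it, $\{1,\dots,a-1\}$ and $\{b+1,\dots,n\}$ are closed. *)

theory Defs
  imports "HOL-Combinatorics.Permutations"
begin

text \<open>The element c_i \<or> d_j of the grid is represented by the pair (i,j),
  with 0 \<le> i,j \<le> m; c_i = (i,0), d_j = (0,j). The order is componentwise.\<close>

definition grid :: "nat \<Rightarrow> (nat \<times> nat) set" where
  "grid m = {0..m} \<times> {0..m}"

definition gjoin :: "nat \<times> nat \<Rightarrow> nat \<times> nat \<Rightarrow> nat \<times> nat" where
  "gjoin x y = (max (fst x) (fst y), max (snd x) (snd y))"

definition join_cong :: "nat \<Rightarrow> ((nat \<times> nat) \<times> (nat \<times> nat)) set \<Rightarrow> bool" where
  "join_cong m \<theta> \<longleftrightarrow> equiv (grid m) \<theta> \<and>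
     (\<forall>x y z. (x, y) \<in> \<theta> \<longrightarrow> z \<in> grid m \<longrightarrow> (gjoin x z, gjoin y z) \<in> \<theta>)"

definition cong_gen :: "nat \<Rightarrow> (nat \<times> nat) set \<Rightarrow> ((nat \<times> nat) \<times> (nat \<times> nat)) set" where
  "cong_gen m S = \<Inter>{\<theta>. join_cong m \<theta> \<and> S \<times> S \<subseteq> \<theta>}"

definition cong_join :: "nat \<Rightarrow> ((nat \<times> nat) \<times> (nat \<times> nat)) set set \<Rightarrow> ((nat \<times> nat) \<times> (nat \<times> nat)) set" where
  "cong_join m \<Theta>s = \<Inter>{\<theta>. join_cong m \<theta> \<and> (\<forall>\<phi>\<in>\<Theta>s. \<phi> \<subseteq> \<theta>)}"

definition beta :: "nat \<Rightarrow> (nat \<Rightarrow> nat) \<Rightarrow> ((nat \<times> nat) \<times> (nat \<times> nat)) set" where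
  "beta m \<pi> = cong_join m
     ((\<lambda>i. cong_gen m {(i - 1, \<pi> i), (i, \<pi> i - 1), (i, \<pi> i)}) ` {1..m})"

text \<open>Elements of the quotient are the classes in grid m // \<theta>;
  [x] \<le> [y] iff [x] \<or> [y] = [y], i.e. (x \<or> y, y) \<in> \<theta>.\<close>

definition cls :: "((nat \<times> nat) \<times> (nat \<times> nat)) set \<Rightarrow> nat \<times> nat \<Rightarrow> (nat \<times> nat) set" where
  "cls \<theta> x = \<theta> `` {x}"

definition qle :: "((nat \<times> nat) \<times> (nat \<times> nat)) set \<Rightarrow> (nat \<times> nat) set \<Rightarrow> (nat \<times> nat) set \<Rightarrow> bool" where
  "qle \<theta> A B \<longleftrightarrow> (\<exists>x\<in>A. \<exists>y\<in>B. (gjoin x y, y) \<in> \<theta>)"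

definition narrows :: "nat \<Rightarrow> ((nat \<times> nat) \<times> (nat \<times> nat)) set \<Rightarrow> (nat \<times> nat) set \<Rightarrow> bool" where
  "narrows m \<theta> A \<longleftrightarrow> A \<in> grid m // \<theta> \<and>
     (\<forall>B \<in> grid m // \<theta>. qle \<theta> A B \<or> qle \<theta> B A)"

definition qinterval :: "nat \<Rightarrow> ((nat \<times> nat) \<times> (nat \<times> nat)) set \<Rightarrow> (nat \<times> nat) set \<Rightarrow> (nat \<times> nat) set \<Rightarrow> (nat \<times> nat) set set" where
  "qinterval m \<theta> A B = {X \<in> grid m // \<theta>. qle \<theta> A X \<and> qle \<theta> X B}"

definition left_bd :: "nat \<Rightarrow> ((nat \<times> nat) \<times> (nat \<times> nat)) set \<Rightarrow> (nat \<times> nat) set set" where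
  "left_bd m \<theta> = (\<lambda>i. cls \<theta> (i, 0)) ` {0..m}"

definition right_bd :: "nat \<Rightarrow> ((nat \<times> nat) \<times> (nat \<times> nat)) set \<Rightarrow> (nat \<times> nat) set set" where
  "right_bd m \<theta> = (\<lambda>j. cls \<theta> (0, j)) ` {0..m}"

text \<open>The subdiagram of the canonical diagram of G/\<theta> (G of length 2m) determined by the
  interval [A,B] (A,B narrows), with left/right boundary chains the intersections of the
  ambient boundary chains with [A,B], is boundary-similar to the canonical diagram of
  G'/\<theta>' (G' of length 2m'): there is a lattice (= order) isomorphism preserving the left
  and the right boundary chains.\<close>

definition subdiagram_similar ::
  "nat \<Rightarrow> ((nat \<times> nat) \<times> (nat \<times> nat)) set \<Rightarrow> (nat \<times> nat) set \<Rightarrow> (nat \<times> nat) set \<Rightarrow>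
   nat \<Rightarrow> ((nat \<times> nat) \<times> (nat \<times> nat)) set \<Rightarrow> bool" where
  "subdiagram_similar m \<theta> A B m' \<theta>' \<longleftrightarrow>
    (\<exists>\<phi>. bij_betw \<phi> (qinterval m \<theta> A B) (grid m' // \<theta>') \<and>
      (\<forall>X\<in>qinterval m \<theta> A B. \<forall>Y\<in>qinterval m \<theta> A B. qle \<theta> X Y \<longleftrightarrow> qle \<theta>' (\<phi> X) (\<phi> Y)) \<and>
      \<phi> ` (left_bd m \<theta> \<inter> qinterval m \<theta> A B) = left_bd m' \<theta>' \<and>
      \<phi> ` (right_bd m \<theta> \<inter> qinterval m \<theta> A B) = right_bd m' \<theta>')"

definition closed_set :: "(nat \<Rightarrow> nat) \<Rightarrow> nat set \<Rightarrow> bool" where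
  "closed_set \<sigma> J \<longleftrightarrow> \<sigma> ` J \<subseteq> J"

definition is_section :: "nat \<Rightarrow> (nat \<Rightarrow> nat) \<Rightarrow> nat set \<Rightarrow> bool" where
  "is_section n \<sigma> I \<longleftrightarrow> (\<exists>a b. 1 \<le> a \<and> a \<le> b \<and> b \<le> n \<and> I = {a..b} \<and>
     closed_set \<sigma> {a..b} \<and> closed_set \<sigma> {1..<a} \<and> closed_set \<sigma> {b+1..n})"

end

theory Submission
  imports Defs
begin


lemma gjoin_grid: "x \<in> grid m \<Longrightarrow> y \<in> grid m \<Longrightarrow> gjoin x y \<in> grid m"
  by (auto simp: grid_def gjoin_def)

definition Sf :: "nat \<Rightarrow> (nat \<Rightarrow> nat) \<Rightarrow> nat \<times> nat \<Rightarrow> nat set" where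
  "Sf m p x = {k \<in> {1..m}. k \<le> fst x \<or> p k \<le> snd x}"

lemma Sf_gjoin: "Sf m p (gjoin x y) = Sf m p x \<union> Sf m p y"
  by (auto simp: Sf_def gjoin_def)

definition kerS :: "nat \<Rightarrow> (nat \<times> nat \<Rightarrow> 'a set) \<Rightarrow> ((nat \<times> nat) \<times> (nat \<times> nat)) set" where
  "kerS m S = {(x,y). x \<in> grid m \<and> y \<in> grid m \<and> S x = S y}"

lemma kerS_join_cong:
  assumes "\<And>x y. S (gjoin x y) = S x \<union> S y" shows "join_cong m (kerS m S)"
proof -
  have "kerS m S \<subseteq> grid m \<times> grid m" unfolding kerS_def by auto
  moreover have "refl_on (grid m) (kerS m S)" unfolding refl_on_def kerS_def by auto
  moreover have "sym (kerS m S)" unfolding sym_on_def kerS_def by auto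
  moreover have "trans (kerS m S)" unfolding trans_on_def kerS_def by auto
  moreover have "\<forall>x y z. (x, y) \<in> kerS m S \<longrightarrow> z \<in> grid m \<longrightarrow> (gjoin x z, gjoin y z) \<in> kerS m S"
    unfolding kerS_def using gjoin_grid assms by auto
  ultimately show ?thesis unfolding join_cong_def equiv_def by blast
qed

lemma Inter_join_cong:
  assumes "F \<noteq> {}" "\<And>\<theta>. \<theta> \<in> F \<Longrightarrow> join_cong m \<theta>"
  shows "join_cong m (\<Inter>F)"
proof -
  obtain \<theta>0 where t0: "\<theta>0 \<in> F" using assms(1) by blast
  have e1: "\<theta> \<subseteq> grid m \<times> grid m" if "\<theta> \<in> F" for \<theta>
    using assms(2)[OF that] unfolding join_cong_def equiv_def by blast
  have e2: "(x,x) \<in> \<theta>" if "\<theta> \<in> F" "x \<in> grid m" for \<theta> x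
    using assms(2)[OF that(1)] that(2) unfolding join_cong_def equiv_def refl_on_def by blast
  have e3: "(y,x) \<in> \<theta>" if "\<theta> \<in> F" "(x,y) \<in> \<theta>" for \<theta> x y
    using assms(2)[OF that(1)] that(2) unfolding join_cong_def equiv_def sym_on_def by blast
  have e4: "(x,z) \<in> \<theta>" if "\<theta> \<in> F" "(x,y) \<in> \<theta>" "(y,z) \<in> \<theta>" for \<theta> x y z
    using assms(2)[OF that(1)] that(2,3) unfolding join_cong_def equiv_def trans_on_def by blast
  have e5: "(gjoin x z, gjoin y z) \<in> \<theta>" if "\<theta> \<in> F" "(x,y) \<in> \<theta>" "z \<in> grid m" for \<theta> x y z
    using assms(2)[OF that(1)] that(2,3) unfolding join_cong_def by blast
  have "\<Inter>F \<subseteq> grid m \<times> grid m" using e1 t0 by blast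
  moreover have "refl_on (grid m) (\<Inter>F)" unfolding refl_on_def using e2 by blast
  moreover have "sym (\<Inter>F)" unfolding sym_on_def using e3 by blast
  moreover have "trans (\<Inter>F)" unfolding trans_on_def using e4 by blast
  moreover have "\<forall>x y z. (x, y) \<in> \<Inter>F \<longrightarrow> z \<in> grid m \<longrightarrow> (gjoin x z, gjoin y z) \<in> \<Inter>F"
    using e5 by blast
  ultimately show ?thesis unfolding join_cong_def equiv_def by blast
qed

definition fam where
  "fam m p = {\<theta>. join_cong m \<theta> \<and> (\<forall>\<phi>\<in>(\<lambda>i. cong_gen m {(i - 1, p i), (i, p i - 1), (i, p i)}) ` {1..m}. \<phi> \<subseteq> \<theta>)}"

lemma beta_fam: "beta m p = \<Inter>(fam m p)"
  unfolding beta_def cong_join_def fam_def by simp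

lemma kerS_fam:
  assumes bij: "bij_betw p {1..m} {1..m}"
  shows "kerS m (Sf m p) \<in> fam m p"
proof -
  let ?K = "kerS m (Sf m p)"
  have jc: "join_cong m ?K" by (rule kerS_join_cong) (rule Sf_gjoin)
  have "cong_gen m {(i - 1, p i), (i, p i - 1), (i, p i)} \<subseteq> ?K" if i: "i \<in> {1..m}" for i
  proof -
    have pi: "p i \<in> {1..m}" using bij i bij_betwE by blast
    have inj: "inj_on p {1..m}" using bij bij_betw_def by blast
    have "(k \<le> i - 1 \<or> p k \<le> p i) = (k \<le> i \<or> p k \<le> p i)" for k
      using i by (cases "k = i") auto
    then have s1: "Sf m p (i - 1, p i) = Sf m p (i, p i)"
      unfolding Sf_def by simp
    have "(k \<le> i \<or> p k \<le> p i - 1) = (k \<le> i \<or> p k \<le> p i)" if k: "k \<in> {1..m}" for k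
    proof (cases "k = i")
      case False
      then have "p k \<noteq> p i" using inj k i unfolding inj_on_def by blast
      then show ?thesis by auto
    qed simp
    then have s2: "Sf m p (i, p i - 1) = Sf m p (i, p i)"
      unfolding Sf_def by auto
    have g: "{(i - 1, p i), (i, p i - 1), (i, p i)} \<subseteq> grid m"
      using i pi by (auto simp: grid_def)
    have "{(i - 1, p i), (i, p i - 1), (i, p i)} \<times> {(i - 1, p i), (i, p i - 1), (i, p i)} \<subseteq> ?K"
      using g s1 s2 unfolding kerS_def by auto
    then show ?thesis unfolding cong_gen_def using jc by blast
  qed
  then show ?thesis unfolding fam_def using jc by blast
qed

lemma beta_jc:
  assumes bij: "bij_betw p {1..m} {1..m}"
  shows "join_cong m (beta m p)"
  unfolding beta_fam
  by (rule Inter_join_cong) (use kerS_fam[OF bij] in \<open>auto simp: fam_def\<close>)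

lemma beta_sub:
  assumes bij: "bij_betw p {1..m} {1..m}"
  shows "beta m p \<subseteq> kerS m (Sf m p)"
  unfolding beta_fam using kerS_fam[OF bij] by blast

lemma beta_gen:
  assumes "i \<in> {1..m}" "a \<in> {(i - 1, p i), (i, p i - 1), (i, p i)}"
    "b \<in> {(i - 1, p i), (i, p i - 1), (i, p i)}"
  shows "(a, b) \<in> beta m p"
proof -
  have "\<And>\<theta>. \<theta> \<in> fam m p \<Longrightarrow> (a,b) \<in> \<theta>"
  proof -
    fix \<theta> assume "\<theta> \<in> fam m p"
    then have "cong_gen m {(i - 1, p i), (i, p i - 1), (i, p i)} \<subseteq> \<theta>"
      using assms(1) unfolding fam_def by blast
    moreover have "(a,b) \<in> cong_gen m {(i - 1, p i), (i, p i - 1), (i, p i)}"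
      using assms(2,3) unfolding cong_gen_def by blast
    ultimately show "(a,b) \<in> \<theta>" by blast
  qed
  then show ?thesis unfolding beta_fam by blast
qed

lemma step_i:
  assumes bij: "bij_betw p {1..m} {1..m}" and x: "(i,j) \<in> grid m" and im: "i < m"
    and pj: "p (i+1) \<le> j"
  shows "((i,j),(i+1,j)) \<in> beta m p"
proof -
  have jc: "join_cong m (beta m p)" by (rule beta_jc[OF bij])
  have "((i, p (i+1)), (i+1, p (i+1))) \<in> beta m p"
    using beta_gen[of "i+1" m "(i, p (i+1))" p "(i+1, p (i+1))"] im by auto
  then have "(gjoin (i, p (i+1)) (i,j), gjoin (i+1, p (i+1)) (i,j)) \<in> beta m p"
    using jc x unfolding join_cong_def by simp
  then show ?thesis using pj by (simp add: gjoin_def max_def)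
qed

lemma step_j:
  assumes bij: "bij_betw p {1..m} {1..m}" and x: "(i,j) \<in> grid m" and k: "k \<in> {1..m}"
    and ki: "k \<le> i" and pk: "p k = j + 1"
  shows "((i,j),(i,j+1)) \<in> beta m p"
proof -
  have jc: "join_cong m (beta m p)" by (rule beta_jc[OF bij])
  have "((k, p k - 1), (k, p k)) \<in> beta m p"
    using beta_gen[of k m "(k, p k - 1)" p "(k, p k)"] k by auto
  then have "(gjoin (k, p k - 1) (i,j), gjoin (k, p k) (i,j)) \<in> beta m p"
    using jc x unfolding join_cong_def by simp
  then show ?thesis using pk ki by (simp add: gjoin_def max_def)
qed

lemma Sf_mono: "fst x \<le> fst y \<Longrightarrow> snd x \<le> snd y \<Longrightarrow> Sf m p x \<subseteq> Sf m p y"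
  unfolding Sf_def by auto

lemma up:
  assumes bij: "bij_betw p {1..m} {1..m}"
  shows "x \<in> grid m \<Longrightarrow> z \<in> grid m \<Longrightarrow> fst x \<le> fst z \<Longrightarrow> snd x \<le> snd z \<Longrightarrow>
     Sf m p x = Sf m p z \<Longrightarrow> (x,z) \<in> beta m p"
proof (induction "(fst z - fst x) + (snd z - snd x)" arbitrary: x rule: less_induct)
  case less
  have jc: "join_cong m (beta m p)" by (rule beta_jc[OF bij])
  have trans: "\<And>a b c. (a,b) \<in> beta m p \<Longrightarrow> (b,c) \<in> beta m p \<Longrightarrow> (a,c) \<in> beta m p"
    using jc unfolding join_cong_def equiv_def trans_on_def by blast
  obtain i j where xe: "x = (i,j)" by (cases x)
  obtain a b where ze: "z = (a,b)" by (cases z)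
  have am: "a \<le> m" "b \<le> m" using less(3) ze by (auto simp: grid_def)
  show ?case
  proof (cases "x = z")
    case True
    then show ?thesis using jc less(2) unfolding join_cong_def equiv_def refl_on_def by blast
  next
    case False
    show ?thesis
    proof (cases "i < a")
      case True
      have "i+1 \<in> Sf m p z" using True am ze unfolding Sf_def by auto
      then have "i+1 \<in> Sf m p x" using less(6) by simp
      then have "p (i+1) \<le> j" using xe unfolding Sf_def by auto
      then have s1: "(x, (i+1,j)) \<in> beta m p"
        using step_i[OF bij] less(2) xe True am by auto
      have g: "(i+1, j) \<in> grid m" using less(2) xe True am by (auto simp: grid_def)
      have "Sf m p x \<subseteq> Sf m p (i+1,j)" "Sf m p (i+1,j) \<subseteq> Sf m p z"
        using Sf_mono less(4,5) xe ze True by auto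
      then have "((i+1,j), z) \<in> beta m p"
        using less(1)[of "(i+1,j)"] g less(3,4,5,6) xe ze True by auto
      then show ?thesis using s1 trans by blast
    next
      case False2: False
      then have ia: "i = a" using less(4) xe ze by auto
      then have jb: "j < b" using False less(5) xe ze by auto
      have "j+1 \<in> {1..m}" using jb am by auto
      then obtain k where k: "k \<in> {1..m}" "p k = j+1"
        using bij unfolding bij_betw_def by (metis imageE)
      then have "k \<in> Sf m p z" using jb ze unfolding Sf_def by auto
      then have "k \<in> Sf m p x" using less(6) by simp
      then have "k \<le> i" using xe k unfolding Sf_def by auto
      then have s1: "(x, (i,j+1)) \<in> beta m p"
        using step_j[OF bij _ k(1) _ k(2)] less(2) xe by auto
      have g: "(i, j+1) \<in> grid m" using less(2) xe jb am by (auto simp: grid_def)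
      have "Sf m p x \<subseteq> Sf m p (i,j+1)" "Sf m p (i,j+1) \<subseteq> Sf m p z"
        using Sf_mono less(4,5) xe ze jb by auto
      then have "((i,j+1), z) \<in> beta m p"
        using less(1)[of "(i,j+1)"] g less(3,4,5,6) xe ze jb ia by auto
      then show ?thesis using s1 trans by blast
    qed
  qed
qed

lemma beta_char:
  assumes bij: "bij_betw p {1..m} {1..m}"
  shows "beta m p = kerS m (Sf m p)"
proof
  show "beta m p \<subseteq> kerS m (Sf m p)" by (rule beta_sub[OF bij])
  show "kerS m (Sf m p) \<subseteq> beta m p"
  proof
    fix xy assume "xy \<in> kerS m (Sf m p)"
    then obtain x y where xy: "xy = (x,y)" "x \<in> grid m" "y \<in> grid m" "Sf m p x = Sf m p y"
      unfolding kerS_def by auto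
    have jc: "join_cong m (beta m p)" by (rule beta_jc[OF bij])
    have "Sf m p (gjoin x y) = Sf m p x" using xy Sf_gjoin by auto
    moreover have "gjoin x y \<in> grid m" using xy gjoin_grid by auto
    ultimately have 1: "(x, gjoin x y) \<in> beta m p" "(y, gjoin x y) \<in> beta m p"
      using up[OF bij] xy by (auto simp: gjoin_def)
    then show "xy \<in> beta m p" using jc xy(1) unfolding join_cong_def equiv_def sym_on_def trans_on_def
      by blast
  qed
qed



lemma cls_kerS: "x \<in> grid m \<Longrightarrow> cls (kerS m S) x = {y \<in> grid m. S y = S x}"
  unfolding cls_def kerS_def by auto

lemma cls_self: "x \<in> grid m \<Longrightarrow> x \<in> cls (kerS m S) x"
  unfolding cls_def kerS_def by auto

lemma quot_kerS: "X \<in> grid m // kerS m S \<longleftrightarrow> (\<exists>x\<in>grid m. X = cls (kerS m S) x)"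
  unfolding quotient_def cls_def by auto

lemma cls_eq_kerS:
  assumes "x \<in> grid m" "y \<in> grid m"
  shows "cls (kerS m S) x = cls (kerS m S) y \<longleftrightarrow> S x = S y"
proof
  assume "cls (kerS m S) x = cls (kerS m S) y"
  moreover have "x \<in> cls (kerS m S) x" by (rule cls_self[OF assms(1)])
  ultimately show "S x = S y" using assms cls_kerS[of y m S] by auto
qed (simp add: cls_kerS[OF assms(1)] cls_kerS[OF assms(2)])

lemma qle_kerS:
  assumes hS: "\<And>x y. S (gjoin x y) = S x \<union> S y" and "x \<in> grid m" "y \<in> grid m"
  shows "qle (kerS m S) (cls (kerS m S) x) (cls (kerS m S) y) \<longleftrightarrow> S x \<subseteq> S y"
proof
  assume "qle (kerS m S) (cls (kerS m S) x) (cls (kerS m S) y)"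
  then obtain a b where ab: "a \<in> cls (kerS m S) x" "b \<in> cls (kerS m S) y"
    "(gjoin a b, b) \<in> kerS m S" unfolding qle_def by blast
  then have "S a = S x" "S b = S y" "S a \<union> S b = S b"
    using assms cls_kerS[of x m S] cls_kerS[of y m S] unfolding kerS_def by auto
  then show "S x \<subseteq> S y" by auto
next
  assume "S x \<subseteq> S y"
  then have "(gjoin x y, y) \<in> kerS m S" using assms gjoin_grid unfolding kerS_def by auto
  moreover have "x \<in> cls (kerS m S) x" "y \<in> cls (kerS m S) y"
    by (rule cls_self[OF assms(2)], rule cls_self[OF assms(3)])
  ultimately show "qle (kerS m S) (cls (kerS m S) x) (cls (kerS m S) y)"
    unfolding qle_def by blast
qed

lemma Sf_w:
  assumes "w \<le> m" "\<forall>k\<in>{1..m}. 1 \<le> p k"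
  shows "Sf m p (w, 0) = {1..w}"
  using assms unfolding Sf_def by force

lemma comparable_w:
  assumes "\<forall>k\<in>{1..m}. (k \<le> w \<longleftrightarrow> p k \<le> w)" "w \<le> m"
  shows "{1..w} \<subseteq> Sf m p x \<or> Sf m p x \<subseteq> {1..w}"
proof (cases "w \<le> fst x \<or> w \<le> snd x")
  case True
  then have "{1..w} \<subseteq> Sf m p x" using assms unfolding Sf_def by force
  then show ?thesis by blast
next
  case False
  then have "Sf m p x \<subseteq> {1..w}" using assms unfolding Sf_def by force
  then show ?thesis by blast
qed



theorem lemma4p5:
  fixes n u v :: nat and \<pi> :: "nat \<Rightarrow> nat"
  assumes "\<pi> permutes {1..n}"
    and "u < v" and "v \<le> n"
    and "is_section n \<pi> {u+1..v}"
  defines "\<sigma> \<equiv> (\<lambda>k. if k \<in> {1..v-u} then \<pi> (u + k) - u else k)"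
  shows "narrows n (beta n \<pi>) (cls (beta n \<pi>) (u, 0)) \<and>
         narrows n (beta n \<pi>) (cls (beta n \<pi>) (v, 0)) \<and>
         subdiagram_similar n (beta n \<pi>) (cls (beta n \<pi>) (u, 0)) (cls (beta n \<pi>) (v, 0))
           (v - u) (beta (v - u) \<sigma>)"
proof -
  define m' where "m' = v - u"
  have bij: "bij_betw \<pi> {1..n} {1..n}" using assms(1) by (rule permutes_imp_bij)
  have inj: "inj_on \<pi> {1..n}" using bij bij_betw_def by blast
  have pin: "\<pi> k \<in> {1..n}" if "k \<in> {1..n}" for k using bij that bij_betwE by blast
  obtain a b where ab: "1 \<le> a" "a \<le> b" "b \<le> n" "{u+1..v} = {a..b}"
    "closed_set \<pi> {a..b}" "closed_set \<pi> {1..<a}" "closed_set \<pi> {b+1..n}"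
    using assms(4) unfolding is_section_def by blast
  have "u+1 = a \<and> v = b" using ab(4) ab(2) assms(2) Icc_eq_Icc[of "u+1" v a b] by auto
  then have a: "a = u+1" and b: "b = v" by auto
  have cmid: "\<pi> k \<in> {u+1..v}" if "k \<in> {u+1..v}" for k
    using ab(5) that unfolding a b closed_set_def by blast
  have clow: "\<pi> k \<in> {1..<u+1}" if "k \<in> {1..<u+1}" for k
    using ab(6) that unfolding a b closed_set_def by blast
  have chigh: "\<pi> k \<in> {v+1..n}" if "k \<in> {v+1..n}" for k
    using ab(7) that unfolding a b closed_set_def by blast
  have Pu: "\<forall>k\<in>{1..n}. (k \<le> u \<longleftrightarrow> \<pi> k \<le> u)"
  proof
    fix k assume k: "k \<in> {1..n}"
    show "(k \<le> u \<longleftrightarrow> \<pi> k \<le> u)"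
    proof (cases "k \<le> u")
      case True then show ?thesis using clow[of k] k by auto
    next
      case False
      then show ?thesis using cmid[of k] chigh[of k] k assms(2) by (cases "k \<le> v") auto
    qed
  qed
  have Pv: "\<forall>k\<in>{1..n}. (k \<le> v \<longleftrightarrow> \<pi> k \<le> v)"
  proof
    fix k assume k: "k \<in> {1..n}"
    show "(k \<le> v \<longleftrightarrow> \<pi> k \<le> v)"
    proof (cases "k \<le> u")
      case True then show ?thesis using clow[of k] k assms(2) by auto
    next
      case False
      then show ?thesis using cmid[of k] chigh[of k] k assms(2) by (cases "k \<le> v") auto
    qed
  qed
  have pos: "\<forall>k\<in>{1..n}. 1 \<le> \<pi> k" using pin by auto
  have smid: "u < \<pi> (u+k) \<and> \<pi> (u+k) \<le> v" if "k \<in> {1..m'}" for k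
  proof -
    have "u+k \<in> {u+1..v}" using that assms(2) unfolding m'_def by auto
    then show ?thesis using cmid[of "u+k"] by auto
  qed
  have sig: "\<sigma> k = \<pi> (u+k) - u" if "k \<in> {1..m'}" for k
    using that unfolding \<sigma>_def m'_def by auto
  have sinj: "inj_on \<sigma> {1..m'}"
  proof (rule inj_onI)
    fix x y assume xy: "x \<in> {1..m'}" "y \<in> {1..m'}" "\<sigma> x = \<sigma> y"
    have sx: "\<sigma> x = \<pi> (u+x) - u" by (rule sig[OF xy(1)])
    have sy: "\<sigma> y = \<pi> (u+y) - u" by (rule sig[OF xy(2)])
    have "u < \<pi> (u+x)" "u < \<pi> (u+y)" using smid[OF xy(1)] smid[OF xy(2)] by auto
    then have "\<pi> (u+x) = \<pi> (u+y)" using xy(3) sx sy by arith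
    moreover have "u+x \<in> {1..n}" "u+y \<in> {1..n}" using xy(1,2) assms(3) unfolding m'_def by auto
    ultimately have "u+x = u+y" by (meson inj_onD[OF inj])
    then show "x = y" by simp
  qed
  have sinto: "\<sigma> ` {1..m'} \<subseteq> {1..m'}"
  proof
    fix z assume "z \<in> \<sigma> ` {1..m'}"
    then obtain k where k: "k \<in> {1..m'}" "z = \<sigma> k" by blast
    have "u < \<pi> (u+k)" "\<pi> (u+k) \<le> v" using smid[OF k(1)] by auto
    then show "z \<in> {1..m'}" using sig[OF k(1)] k(2) unfolding m'_def by auto
  qed
  have sbij: "bij_betw \<sigma> {1..m'} {1..m'}"
    unfolding bij_betw_def using sinj endo_inj_surj[OF _ sinto sinj] by simp
  define Sp where "Sp = Sf n \<pi>"
  define Ss where "Ss = Sf m' \<sigma>"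
  define \<beta> where "\<beta> = beta n \<pi>"
  define \<beta>s where "\<beta>s = beta m' \<sigma>"
  have bc: "\<beta> = kerS n Sp" unfolding \<beta>_def Sp_def by (rule beta_char[OF bij])
  have bcs: "\<beta>s = kerS m' Ss" unfolding \<beta>s_def Ss_def by (rule beta_char[OF sbij])
  have hSp: "\<And>x y. Sp (gjoin x y) = Sp x \<union> Sp y" unfolding Sp_def by (rule Sf_gjoin)
  have hSs: "\<And>x y. Ss (gjoin x y) = Ss x \<union> Ss y" unfolding Ss_def by (rule Sf_gjoin)
  have Spu: "Sp (u,0) = {1..u}" unfolding Sp_def using assms(2,3) pos by (intro Sf_w) auto
  have Spv: "Sp (v,0) = {1..v}" unfolding Sp_def using assms(2,3) pos by (intro Sf_w) auto
  have gu: "(u,0) \<in> grid n" and gv: "(v,0) \<in> grid n" using assms(2,3) by (auto simp: grid_def)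
  have narr: "narrows n \<beta> (cls \<beta> (w,0))" if w: "w \<le> n" "\<forall>k\<in>{1..n}. (k \<le> w \<longleftrightarrow> \<pi> k \<le> w)" for w
  proof -
    have gw: "(w,0) \<in> grid n" using w by (auto simp: grid_def)
    have Sw: "Sp (w,0) = {1..w}" unfolding Sp_def using w pos by (intro Sf_w) auto
    show ?thesis unfolding narrows_def bc
    proof (intro conjI ballI)
      show "cls (kerS n Sp) (w, 0) \<in> grid n // kerS n Sp" using gw quot_kerS[of "cls (kerS n Sp) (w, 0)" n Sp] by blast
      fix B assume "B \<in> grid n // kerS n Sp"
      then obtain x where x: "x \<in> grid n" "B = cls (kerS n Sp) x" using quot_kerS[of B n Sp] by blast
      have "{1..w} \<subseteq> Sp x \<or> Sp x \<subseteq> {1..w}" unfolding Sp_def by (rule comparable_w[OF w(2) w(1)])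
      then show "qle (kerS n Sp) (cls (kerS n Sp) (w, 0)) B \<or> qle (kerS n Sp) B (cls (kerS n Sp) (w, 0))"
        using qle_kerS[OF hSp gw x(1)] qle_kerS[OF hSp x(1) gw] x(2) Sw by simp
    qed
  qed
  have N1: "narrows n \<beta> (cls \<beta> (u,0))" using narr[of u] Pu assms(2,3) by auto
  have N2: "narrows n \<beta> (cls \<beta> (v,0))" using narr[of v] Pv assms(2,3) by auto
  define sh where "sh s = {k \<in> {1..m'}. u + k \<in> s}" for s :: "nat set"
  define g where "g x = (min (fst x - u) m', min (snd x - u) m')" for x :: "nat \<times> nat"
  have gg: "g x \<in> grid m'" for x unfolding g_def grid_def by auto
  have shf: "sh (Sp x) = Ss (g x)" for x
  proof -
    have "(u + k \<le> fst x \<or> \<pi> (u+k) \<le> snd x) \<longleftrightarrow> (k \<le> min (fst x - u) m' \<or> \<sigma> k \<le> min (snd x - u) m')"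
      if k: "k \<in> {1..m'}" for k
      using smid[OF k] sig[OF k] k by (auto simp: m'_def)
    moreover have "u + k \<in> {1..n}" if "k \<in> {1..m'}" for k using that assms(3) by (auto simp: m'_def)
    ultimately show ?thesis unfolding sh_def Sp_def Ss_def Sf_def g_def by auto
  qed
  have shord: "s \<subseteq> t \<longleftrightarrow> sh s \<subseteq> sh t"
    if "{1..u} \<subseteq> s" "s \<subseteq> {1..v}" "{1..u} \<subseteq> t" "t \<subseteq> {1..v}" for s t
  proof
    assume "sh s \<subseteq> sh t"
    show "s \<subseteq> t"
    proof
      fix x assume x: "x \<in> s"
      show "x \<in> t"
      proof (cases "x \<le> u")
        case True
        have "x \<in> {1..v}" using that(2) x by blast
        then have "x \<in> {1..u}" using True by auto
        then show ?thesis using that(3) by blast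
      next
        case False
        then have "x - u \<in> sh s" using x that unfolding sh_def m'_def by force
        then have "x - u \<in> sh t" using \<open>sh s \<subseteq> sh t\<close> by blast
        then show ?thesis using False unfolding sh_def by auto
      qed
    qed
  qed (auto simp: sh_def)
  have inI: "{1..u} \<subseteq> Sp (i,j) \<and> Sp (i,j) \<subseteq> {1..v}"
    if "i \<le> v" "j \<le> v" "u \<le> i \<or> u \<le> j" for i j
  proof
    show "{1..u} \<subseteq> Sp (i,j)" using that Pu assms(2,3) unfolding Sp_def Sf_def by force
    show "Sp (i,j) \<subseteq> {1..v}" using that Pv unfolding Sp_def Sf_def by force
  qed
  define Q where "Q = qinterval n \<beta> (cls \<beta> (u, 0)) (cls \<beta> (v, 0))"
  have Qc: "X \<in> Q \<longleftrightarrow> (\<exists>x\<in>grid n. X = cls \<beta> x \<and> {1..u} \<subseteq> Sp x \<and> Sp x \<subseteq> {1..v})" for X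
  proof
    assume "X \<in> Q"
    then obtain x where x: "x \<in> grid n" "X = cls \<beta> x" and q: "qle \<beta> (cls \<beta> (u,0)) X" "qle \<beta> X (cls \<beta> (v,0))"
      unfolding Q_def qinterval_def bc using quot_kerS[of X n Sp] by blast
    then show "\<exists>x\<in>grid n. X = cls \<beta> x \<and> {1..u} \<subseteq> Sp x \<and> Sp x \<subseteq> {1..v}"
      using qle_kerS[OF hSp gu x(1)] qle_kerS[OF hSp x(1) gv] Spu Spv unfolding bc by auto
  next
    assume "\<exists>x\<in>grid n. X = cls \<beta> x \<and> {1..u} \<subseteq> Sp x \<and> Sp x \<subseteq> {1..v}"
    then obtain x where x: "x \<in> grid n" "X = cls \<beta> x" "{1..u} \<subseteq> Sp x" "Sp x \<subseteq> {1..v}" by blast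
    have xq: "X \<in> grid n // \<beta>" using quot_kerS[of X n Sp] x(1,2) unfolding bc by blast
    show "X \<in> Q"
      unfolding Q_def qinterval_def using xq x(2-4) unfolding bc
      using qle_kerS[OF hSp gu x(1)] qle_kerS[OF hSp x(1) gv] Spu Spv by auto
  qed
  define \<phi> where "\<phi> X = cls \<beta>s (g (SOME x. x \<in> X))" for X
  have phic: "\<phi> (cls \<beta> x) = cls \<beta>s (g x)" if x: "x \<in> grid n" for x
  proof -
    have "x \<in> cls \<beta> x" unfolding bc by (rule cls_self[OF x])
    then have y: "(SOME y. y \<in> cls \<beta> x) \<in> cls \<beta> x" by (rule someI)
    define y where "y = (SOME y. y \<in> cls \<beta> x)"
    have "y \<in> grid n" "Sp y = Sp x" using y cls_kerS[OF x, of Sp] unfolding bc y_def by auto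
    then have "Ss (g y) = Ss (g x)" using shf by metis
    then have "cls \<beta>s (g y) = cls \<beta>s (g x)" unfolding bcs using cls_eq_kerS[OF gg[of y] gg[of x], of Ss] by simp
    then show ?thesis unfolding \<phi>_def y_def by simp
  qed
  have grid_sh: "(u + i, u + j) \<in> grid n" "g (u+i, u+j) = (i,j)" if "(i,j) \<in> grid m'" for i j
    using that assms(2,3) unfolding grid_def g_def m'_def by auto
  have bijQ: "bij_betw \<phi> Q (grid m' // \<beta>s)"
    unfolding bij_betw_def
  proof (intro conjI)
    show "inj_on \<phi> Q"
    proof (rule inj_onI)
      fix X Y assume X: "X \<in> Q" and Y: "Y \<in> Q" and e: "\<phi> X = \<phi> Y"
      obtain x where x: "x \<in> grid n" "X = cls \<beta> x" "{1..u} \<subseteq> Sp x" "Sp x \<subseteq> {1..v}" using X[unfolded Qc] by blast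
      obtain y where y: "y \<in> grid n" "Y = cls \<beta> y" "{1..u} \<subseteq> Sp y" "Sp y \<subseteq> {1..v}" using Y[unfolded Qc] by blast
      have "cls \<beta>s (g x) = cls \<beta>s (g y)" using e phic x y by simp
      then have "Ss (g x) = Ss (g y)" unfolding bcs using cls_eq_kerS[OF gg[of x] gg[of y], of Ss] by simp
      then have "sh (Sp x) = sh (Sp y)" using shf by simp
      then have "Sp x = Sp y" using shord[OF x(3,4) y(3,4)] shord[OF y(3,4) x(3,4)] by auto
      then have "cls \<beta> x = cls \<beta> y" unfolding bc using cls_eq_kerS[OF x(1) y(1), of Sp] by simp
      then show "X = Y" using x(2) y(2) by simp
    qed
    show "\<phi> ` Q = grid m' // \<beta>s"
    proof
      show "\<phi> ` Q \<subseteq> grid m' // \<beta>s"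
      proof
        fix Z assume "Z \<in> \<phi> ` Q"
        then obtain X where X: "X \<in> Q" "Z = \<phi> X" by blast
        then obtain x where "x \<in> grid n" "Z = \<phi> (cls \<beta> x)" using X(1)[unfolded Qc] by blast
        then have "Z = cls \<beta>s (g x)" using phic by simp
        then show "Z \<in> grid m' // \<beta>s" using gg[of x] quot_kerS[of Z m' Ss] unfolding bcs by blast
      qed
      show "grid m' // \<beta>s \<subseteq> \<phi> ` Q"
      proof
        fix Z assume "Z \<in> grid m' // \<beta>s"
        then obtain z where z: "z \<in> grid m'" "Z = cls \<beta>s z" using quot_kerS[of Z m' Ss] unfolding bcs by blast
        obtain i j where ij: "z = (i,j)" by (cases z)
        have gx: "(u+i,u+j) \<in> grid n" "g (u+i,u+j) = z" using grid_sh z(1) ij by auto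
        have "i \<le> m'" "j \<le> m'" using z(1) ij by (auto simp: grid_def)
        then have "u+i \<le> v" "u+j \<le> v" using assms(2) by (auto simp: m'_def)
        then have "{1..u} \<subseteq> Sp (u+i,u+j) \<and> Sp (u+i,u+j) \<subseteq> {1..v}" using inI by simp
        then have "cls \<beta> (u+i,u+j) \<in> Q" unfolding Qc using gx(1) by blast
        moreover have "Z = \<phi> (cls \<beta> (u+i,u+j))" using phic gx z by simp
        ultimately show "Z \<in> \<phi> ` Q" by blast
      qed
    qed
  qed
  have ordQ: "qle \<beta> X Y \<longleftrightarrow> qle \<beta>s (\<phi> X) (\<phi> Y)" if X: "X \<in> Q" and Y: "Y \<in> Q" for X Y
  proof -
    obtain x where x: "x \<in> grid n" "X = cls \<beta> x" "{1..u} \<subseteq> Sp x" "Sp x \<subseteq> {1..v}" using X[unfolded Qc] by blast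
    obtain y where y: "y \<in> grid n" "Y = cls \<beta> y" "{1..u} \<subseteq> Sp y" "Sp y \<subseteq> {1..v}" using Y[unfolded Qc] by blast
    have "qle \<beta> X Y \<longleftrightarrow> Sp x \<subseteq> Sp y" using qle_kerS[OF hSp x(1) y(1)] x y unfolding bc by simp
    also have "\<dots> \<longleftrightarrow> sh (Sp x) \<subseteq> sh (Sp y)" by (rule shord[OF x(3,4) y(3,4)])
    also have "\<dots> \<longleftrightarrow> Ss (g x) \<subseteq> Ss (g y)" using shf by simp
    also have "\<dots> \<longleftrightarrow> qle \<beta>s (\<phi> X) (\<phi> Y)"
      using qle_kerS[OF hSs gg[of x] gg[of y]] phic[OF x(1)] phic[OF y(1)] x(2) y(2) unfolding bcs by simp
    finally show ?thesis .
  qed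
  have leftQ: "\<phi> ` (left_bd n \<beta> \<inter> Q) = left_bd m' \<beta>s"
  proof
    show "\<phi> ` (left_bd n \<beta> \<inter> Q) \<subseteq> left_bd m' \<beta>s"
    proof
      fix Z assume "Z \<in> \<phi> ` (left_bd n \<beta> \<inter> Q)"
      then obtain i where i: "i \<le> n" "Z = \<phi> (cls \<beta> (i,0))" unfolding left_bd_def by auto
      have "(i,0) \<in> grid n" using i by (auto simp: grid_def)
      then have "Z = cls \<beta>s (min (i - u) m', 0)" using phic i by (simp add: g_def)
      then show "Z \<in> left_bd m' \<beta>s" unfolding left_bd_def by auto
    qed
    show "left_bd m' \<beta>s \<subseteq> \<phi> ` (left_bd n \<beta> \<inter> Q)"
    proof
      fix Z assume "Z \<in> left_bd m' \<beta>s"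
      then obtain i where i: "i \<le> m'" "Z = cls \<beta>s (i,0)" unfolding left_bd_def by auto
      have gx: "(u+i,0) \<in> grid n" using i assms(2,3) by (auto simp: grid_def m'_def)
      have "u+i \<le> v" using i assms(2) by (auto simp: m'_def)
      then have "{1..u} \<subseteq> Sp (u+i,0) \<and> Sp (u+i,0) \<subseteq> {1..v}" using inI by simp
      then have "cls \<beta> (u+i,0) \<in> Q" unfolding Qc using gx by blast
      moreover have "cls \<beta> (u+i,0) \<in> left_bd n \<beta>" using i assms(2,3) unfolding left_bd_def m'_def by auto
      moreover have "Z = \<phi> (cls \<beta> (u+i,0))" using phic[OF gx] i by (simp add: g_def)
      ultimately show "Z \<in> \<phi> ` (left_bd n \<beta> \<inter> Q)" by blast
    qed
  qed
  have rightQ: "\<phi> ` (right_bd n \<beta> \<inter> Q) = right_bd m' \<beta>s"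
  proof
    show "\<phi> ` (right_bd n \<beta> \<inter> Q) \<subseteq> right_bd m' \<beta>s"
    proof
      fix Z assume "Z \<in> \<phi> ` (right_bd n \<beta> \<inter> Q)"
      then obtain j where j: "j \<le> n" "Z = \<phi> (cls \<beta> (0,j))" unfolding right_bd_def by auto
      have "(0,j) \<in> grid n" using j by (auto simp: grid_def)
      then have "Z = cls \<beta>s (0, min (j - u) m')" using phic j by (simp add: g_def)
      then show "Z \<in> right_bd m' \<beta>s" unfolding right_bd_def by auto
    qed
    show "right_bd m' \<beta>s \<subseteq> \<phi> ` (right_bd n \<beta> \<inter> Q)"
    proof
      fix Z assume "Z \<in> right_bd m' \<beta>s"
      then obtain j where j: "j \<le> m'" "Z = cls \<beta>s (0,j)" unfolding right_bd_def by auto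
      have gx: "(0,u+j) \<in> grid n" using j assms(2,3) by (auto simp: grid_def m'_def)
      have "u+j \<le> v" using j assms(2) by (auto simp: m'_def)
      then have "{1..u} \<subseteq> Sp (0,u+j) \<and> Sp (0,u+j) \<subseteq> {1..v}" using inI by simp
      then have "cls \<beta> (0,u+j) \<in> Q" unfolding Qc using gx by blast
      moreover have "cls \<beta> (0,u+j) \<in> right_bd n \<beta>" using j assms(2,3) unfolding right_bd_def m'_def by auto
      moreover have "Z = \<phi> (cls \<beta> (0,u+j))" using phic[OF gx] j by (simp add: g_def)
      ultimately show "Z \<in> \<phi> ` (right_bd n \<beta> \<inter> Q)" by blast
    qed
  qed
  have "subdiagram_similar n \<beta> (cls \<beta> (u, 0)) (cls \<beta> (v, 0)) m' \<beta>s"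
    unfolding subdiagram_similar_def Q_def[symmetric]
    using bijQ ordQ leftQ rightQ by blast
  then show ?thesis using N1 N2 unfolding \<beta>_def \<beta>s_def m'_def by blast
qed

end
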